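(* Let $S$ be an entropy function for a finite set $X$ and $X'\subset X$. Then the function $S'$ on $2^{X'}$ defined by \[ S'(A):=\min_{\hat A\subseteq X\setminus X'}S(A\cup\hat A)\qquad(A\subseteq X')\] is an entropy function for $X'$.
   Context: An entropy function for a finite set $X$ is a function $S:2^X\to[0,\infty)$ with $S(\emptyset)=0$, $S(A)+S(B)\ge S(A\cap B)+S(A\cup B)$ and $S(A)+S(B)\ge S(A\setminus B)+S(B\setminus A)$ for all $A,B\subseteq X$. *)

theory Defs
  imports Complex_Main
begin

definition entropy_function :: "'a set \<Rightarrow> ('a set \<Rightarrow> real) \<Rightarrow> bool" where
  "entropy_function X S \<longleftrightarrow>
     finite X \<and>
     (\<forall>A. A \<subseteq> X \<longrightarrow> S A \<ge> 0) \<and>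
     S {} = 0 \<and>
     (\<forall>A B. A \<subseteq> X \<longrightarrow> B \<subseteq> X \<longrightarrow> S A + S B \<ge> S (A \<inter> B) + S (A \<union> B)) \<and>
     (\<forall>A B. A \<subseteq> X \<longrightarrow> B \<subseteq> X \<longrightarrow> S A + S B \<ge> S (A - B) + S (B - A))"

definition restrict_entropy :: "'a set \<Rightarrow> 'a set \<Rightarrow> ('a set \<Rightarrow> real) \<Rightarrow> 'a set \<Rightarrow> real" where
  "restrict_entropy X X' S A = Min ((\<lambda>Ahat. S (A \<union> Ahat)) ` Pow (X - X'))"

end

theory Submission
  imports Defs
begin

lemma re_le:
  assumes "finite X" "H \<subseteq> X - X'"
  shows "restrict_entropy X X' S A \<le> S (A \<union> H)"
  unfolding restrict_entropy_def
  using assms by (intro Min_le) auto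

lemma re_obt:
  assumes "finite X"
  obtains H where "H \<subseteq> X - X'" "restrict_entropy X X' S A = S (A \<union> H)"
proof -
  have "restrict_entropy X X' S A \<in> (\<lambda>Ahat. S (A \<union> Ahat)) ` Pow (X - X')"
    unfolding restrict_entropy_def using assms by (intro Min_in) auto
  then show ?thesis using that by auto
qed

theorem proposition26:
  fixes X X' :: "'a set" and S :: "'a set \<Rightarrow> real"
  assumes "entropy_function X S"
    and "X' \<subseteq> X"
  shows "entropy_function X' (restrict_entropy X X' S)"
proof -
  let ?R = "restrict_entropy X X' S"
  have fin: "finite X" and nn: "\<And>A. A \<subseteq> X \<Longrightarrow> S A \<ge> 0" and e: "S {} = 0"
    and sm: "\<And>A B. A \<subseteq> X \<Longrightarrow> B \<subseteq> X \<Longrightarrow> S A + S B \<ge> S (A \<inter> B) + S (A \<union> B)"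
    and sd: "\<And>A B. A \<subseteq> X \<Longrightarrow> B \<subseteq> X \<Longrightarrow> S A + S B \<ge> S (A - B) + S (B - A)"
    using assms(1) unfolding entropy_function_def by auto
  have "finite X'" using fin assms(2) finite_subset by blast
  moreover have nn': "?R A \<ge> 0" if "A \<subseteq> X'" for A
  proof -
    obtain H where "H \<subseteq> X - X'" "?R A = S (A \<union> H)" using re_obt[OF fin] by blast
    then show ?thesis using nn[of "A \<union> H"] that assms(2) by auto
  qed
  moreover have "?R {} = 0"
    using re_le[OF fin, of "{}" X' S "{}"] nn'[of "{}"] e by simp
  moreover have "?R A + ?R B \<ge> ?R (A \<inter> B) + ?R (A \<union> B)"
    if "A \<subseteq> X'" "B \<subseteq> X'" for A B
  proof -
    obtain H where H: "H \<subseteq> X - X'" "?R A = S (A \<union> H)" using re_obt[OF fin] by blast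
    obtain K where K: "K \<subseteq> X - X'" "?R B = S (B \<union> K)" using re_obt[OF fin] by blast
    have 1: "(A \<union> H) \<inter> (B \<union> K) = (A \<inter> B) \<union> (H \<inter> K)" using H K that by auto
    have 2: "(A \<union> H) \<union> (B \<union> K) = (A \<union> B) \<union> (H \<union> K)" by auto
    have "S (A \<union> H) + S (B \<union> K) \<ge> S ((A \<inter> B) \<union> (H \<inter> K)) + S ((A \<union> B) \<union> (H \<union> K))"
    proof -
      have "A \<union> H \<subseteq> X" "B \<union> K \<subseteq> X" using H K that assms(2) by auto
      then show ?thesis using sm[of "A \<union> H" "B \<union> K"] 1 2 by simp
    qed
    moreover have "?R (A \<inter> B) \<le> S ((A \<inter> B) \<union> (H \<inter> K))" using H by (intro re_le[OF fin]) auto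
    moreover have "?R (A \<union> B) \<le> S ((A \<union> B) \<union> (H \<union> K))" using H K by (intro re_le[OF fin]) auto
    ultimately show ?thesis using H K by linarith
  qed
  moreover have "?R A + ?R B \<ge> ?R (A - B) + ?R (B - A)"
    if "A \<subseteq> X'" "B \<subseteq> X'" for A B
  proof -
    obtain H where H: "H \<subseteq> X - X'" "?R A = S (A \<union> H)" using re_obt[OF fin] by blast
    obtain K where K: "K \<subseteq> X - X'" "?R B = S (B \<union> K)" using re_obt[OF fin] by blast
    have 1: "(A \<union> H) - (B \<union> K) = (A - B) \<union> (H - K)" using H K that by auto
    have 2: "(B \<union> K) - (A \<union> H) = (B - A) \<union> (K - H)" using H K that by auto
    have "S (A \<union> H) + S (B \<union> K) \<ge> S ((A - B) \<union> (H - K)) + S ((B - A) \<union> (K - H))"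
    proof -
      have "A \<union> H \<subseteq> X" "B \<union> K \<subseteq> X" using H K that assms(2) by auto
      then show ?thesis using sd[of "A \<union> H" "B \<union> K"] 1 2 by simp
    qed
    moreover have "?R (A - B) \<le> S ((A - B) \<union> (H - K))" using H by (intro re_le[OF fin]) auto
    moreover have "?R (B - A) \<le> S ((B - A) \<union> (K - H))" using K by (intro re_le[OF fin]) auto
    ultimately show ?thesis using H K by linarith
  qed
  ultimately show ?thesis unfolding entropy_function_def by blast
qed

end
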